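(* Let $k$ be a positive integer and let $T$ be a semi-complete digraph with $n$ vertices that admits an ordering $(v_1,\dots,v_n)$ of its vertices of width at most $k$. Let $T'$ be the transitive tournament on the same vertex set with $(v_i,v_j)\in E(T')$ iff $i<j$. Then every $k$-cut of $T$ is a $2k(1+\ln 2k)$-cut of $T'$.
   Context: A simple digraph (no loops, no multiple arcs) $T$ is semi-complete if for every pair of distinct vertices $v,w$ at least one of $(v,w),(w,v)$ is an arc. The width of an ordering $(v_1,\dots,v_n)$ of $V(T)$ is $\max_{1\le t\le n-1}|E(\{v_{t+1},\dots,v_n\},\{v_1,\dots,v_t\})|$, where $E(A,B)$ is the set of arcs with tail in $A$ and head in $B$. A $d$-cut of a digraph $T$ (for a real $d\ge0$) is an ordered partition $(X,Y)$ of $V(T)$ (either part may be empty) such that there are at most $d$ arcs $(u,v)\in E(T)$ with $u\in Y$ and $v\in X$. *)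

theory Defs
  imports Complex_Main
begin

definition semi_complete :: "'a set \<Rightarrow> ('a \<times> 'a) set \<Rightarrow> bool" where
  "semi_complete V E \<longleftrightarrow> finite V \<and> E \<subseteq> V \<times> V \<and> (\<forall>v. (v, v) \<notin> E) \<and>
     (\<forall>v\<in>V. \<forall>w\<in>V. v \<noteq> w \<longrightarrow> (v, w) \<in> E \<or> (w, v) \<in> E)"

definition arcs_between :: "('a \<times> 'a) set \<Rightarrow> 'a set \<Rightarrow> 'a set \<Rightarrow> ('a \<times> 'a) set" where
  "arcs_between E A B = {(u, v) \<in> E. u \<in> A \<and> v \<in> B}"

definition is_ordering :: "'a set \<Rightarrow> 'a list \<Rightarrow> bool" where
  "is_ordering V vs \<longleftrightarrow> distinct vs \<and> set vs = V"

definition ordering_width :: "('a \<times> 'a) set \<Rightarrow> 'a list \<Rightarrow> nat" where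
  "ordering_width E vs = Max ({card (arcs_between E (set (drop t vs)) (set (take t vs))) | t.
       1 \<le> t \<and> t \<le> length vs - 1} \<union> {0})"

definition is_d_cut :: "'a set \<Rightarrow> ('a \<times> 'a) set \<Rightarrow> real \<Rightarrow> 'a set \<Rightarrow> 'a set \<Rightarrow> bool" where
  "is_d_cut V E d X Y \<longleftrightarrow> X \<union> Y = V \<and> X \<inter> Y = {} \<and>
     real (card (arcs_between E Y X)) \<le> d"

definition transitive_tournament :: "'a list \<Rightarrow> ('a \<times> 'a) set" where
  "transitive_tournament vs = {(vs ! i, vs ! j) | i j. i < j \<and> j < length vs}"

end

theory Submission imports Defs "HOL-Analysis.Harmonic_Numbers" begin

lemma harm_le_ln: assumes "m > 0" shows "harm m \<le> 1 + ln (real m :: real)"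
proof -
  obtain n where m: "m = Suc n" using assms by (cases m) auto
  have "harm (Suc n) - ln (real (Suc n)) \<le> harm (Suc 0) - ln (real (Suc 0))"
    using decseqD[OF decseq_harm_diff_ln, of 0 n] by simp
  then show ?thesis by (simp add: m harm_Suc harm_def)
qed

lemma cross_bound:
  fixes V :: "'a set" and E :: "('a \<times> 'a) set"
  assumes sc: "semi_complete V E" and ord: "is_ordering V vs"
    and w: "ordering_width E vs \<le> k"
    and cut: "is_d_cut V E (real k) X Y"
    and t: "1 \<le> t" "t \<le> length vs - 1"
  shows "card {a. a < t \<and> vs ! a \<in> Y} * card {b. t \<le> b \<and> b < length vs \<and> vs ! b \<in> X} \<le> 2 * k"
proof -
  let ?L = "{a. a < t \<and> vs ! a \<in> Y}"
  let ?R = "{b. t \<le> b \<and> b < length vs \<and> vs ! b \<in> X}"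
  let ?g = "\<lambda>(a,b). (vs ! a, vs ! b)"
  let ?A1 = "arcs_between E Y X"
  let ?A2 = "arcs_between E (set (drop t vs)) (set (take t vs))"
  have fE: "finite E" using sc unfolding semi_complete_def by (meson finite_SigmaI finite_subset)
  have f1: "finite ?A1" "finite ?A2" by (rule finite_subset[OF _ fE], auto simp: arcs_between_def)+
  have dist: "distinct vs" using ord unfolding is_ordering_def by simp
  have tn: "t < length vs" using t by linarith
  have injn: "inj_on (\<lambda>i. vs ! i) {..<length vs}"
    using dist unfolding distinct_conv_nth inj_on_def by blast
  have LRn: "?L \<times> ?R \<subseteq> {..<length vs} \<times> {..<length vs}" using tn by auto
  have injg: "inj_on ?g (?L \<times> ?R)"
  proof (rule inj_on_subset[OF _ LRn])
    show "inj_on ?g ({..<length vs} \<times> {..<length vs})"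
      using injn unfolding inj_on_def by auto
  qed
  have c1: "card ?A1 \<le> k" using cut unfolding is_d_cut_def by simp
  have c2: "card ?A2 \<le> k"
  proof -
    let ?S = "{card (arcs_between E (set (drop t vs)) (set (take t vs))) | t.
       1 \<le> t \<and> t \<le> length vs - 1} \<union> {0}"
    have "finite ?S" by simp
    moreover have "card ?A2 \<in> ?S" using t by blast
    ultimately have "card ?A2 \<le> Max ?S" by (rule Max_ge)
    then show ?thesis using w unfolding ordering_width_def by linarith
  qed
  have sub: "?L \<times> ?R \<subseteq> {p \<in> ?L \<times> ?R. ?g p \<in> ?A1} \<union> {p \<in> ?L \<times> ?R. prod.swap (?g p) \<in> ?A2}"
  proof
    fix p assume p: "p \<in> ?L \<times> ?R"
    then obtain a b where ab: "p = (a,b)" "a < t" "vs!a \<in> Y" "t \<le> b" "b < length vs" "vs!b \<in> X" by auto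
    have an: "a < length vs" using ab tn by linarith
    have ne: "vs!a \<noteq> vs!b" using dist ab an by (simp add: nth_eq_iff_index_eq)
    have inV: "vs!a \<in> V" "vs!b \<in> V" using ord an ab unfolding is_ordering_def by auto
    have "(vs!a, vs!b) \<in> E \<or> (vs!b, vs!a) \<in> E" using sc ne inV unfolding semi_complete_def by blast
    moreover have "vs!a \<in> set (take t vs)"
      using ab an by (metis in_set_conv_nth length_take min_less_iff_conj nth_take)
    moreover have "vs!b \<in> set (drop t vs)"
    proof -
      have "drop t vs ! (b - t) = vs ! b" using ab by simp
      moreover have "b - t < length (drop t vs)" using ab by simp
      ultimately show ?thesis by (metis nth_mem)
    qed
    ultimately show "p \<in> {p \<in> ?L \<times> ?R. ?g p \<in> ?A1} \<union> {p \<in> ?L \<times> ?R. prod.swap (?g p) \<in> ?A2}"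
      using p ab unfolding arcs_between_def by auto
  qed
  have fLR: "finite (?L \<times> ?R)" by auto
  have "card ?L * card ?R = card (?L \<times> ?R)" by (simp add: card_cartesian_product)
  also have "\<dots> \<le> card ({p \<in> ?L \<times> ?R. ?g p \<in> ?A1} \<union> {p \<in> ?L \<times> ?R. prod.swap (?g p) \<in> ?A2})"
    by (rule card_mono[OF _ sub]) (use fLR in simp)
  also have "\<dots> \<le> card {p \<in> ?L \<times> ?R. ?g p \<in> ?A1} + card {p \<in> ?L \<times> ?R. prod.swap (?g p) \<in> ?A2}"
    by (rule card_Un_le)
  also have "card {p \<in> ?L \<times> ?R. ?g p \<in> ?A1} \<le> card ?A1"
    by (rule card_inj_on_le[OF inj_on_subset[OF injg]]) (auto simp: f1)
  also have "card {p \<in> ?L \<times> ?R. prod.swap (?g p) \<in> ?A2} \<le> card ?A2"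
  proof (rule card_inj_on_le[where f="\<lambda>p. prod.swap (?g p)"])
    show "inj_on (\<lambda>p. prod.swap (?g p)) {p \<in> ?L \<times> ?R. prod.swap (?g p) \<in> ?A2}"
      using injg unfolding inj_on_def by auto
  qed (auto simp: f1)
  finally show ?thesis using c1 c2 by linarith
qed

theorem mainTheorem11:
  fixes V :: "'a set" and E :: "('a \<times> 'a) set" and vs :: "'a list" and k :: nat
    and X Y :: "'a set"
  assumes "k > 0"
    and "semi_complete V E"
    and "is_ordering V vs"
    and "ordering_width E vs \<le> k"
    and "is_d_cut V E (real k) X Y"
  shows "is_d_cut V (transitive_tournament vs) (2 * real k * (1 + ln (2 * real k))) X Y"
proof -
  note kpos = assms(1) and sc = assms(2) and ord = assms(3) and w = assms(4) and cut = assms(5)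
  define n where "n = length vs"
  define Yi where "Yi = {i. i < n \<and> vs ! i \<in> Y}"
  define r where "r i = card {a. a < Suc i \<and> vs ! a \<in> Y}" for i
  define C where "C i = {b. Suc i \<le> b \<and> b < n \<and> vs ! b \<in> X}" for i
  define f :: "nat \<Rightarrow> real" where "f m = (if m \<le> 2 * k then 2 * real k / real m else 0)" for m
  have fYi: "finite Yi" unfolding Yi_def by auto
  have fC: "finite (C i)" for i unfolding C_def by auto
  have rC: "r i * card (C i) \<le> 2 * k" if "i \<in> Yi" for i
  proof (cases "Suc i = n")
    case True
    then have "C i = {}" unfolding C_def by auto
    then show ?thesis by simp
  next
    case False
    with that have "1 \<le> Suc i" "Suc i \<le> length vs - 1" unfolding Yi_def n_def by auto
    from cross_bound[OF sc ord w cut this] show ?thesis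
      unfolding r_def C_def n_def by simp
  qed
  have rpos: "r i \<ge> 1" if "i \<in> Yi" for i
  proof -
    have "i \<in> {a. a < Suc i \<and> vs ! a \<in> Y}" using that unfolding Yi_def by auto
    then have "{a. a < Suc i \<and> vs ! a \<in> Y} \<noteq> {}" by blast
    then show ?thesis unfolding r_def by (simp add: Suc_le_eq card_gt_0_iff)
  qed
  have rmono: "r i < r j" if "i \<in> Yi" "j \<in> Yi" "i < j" for i j
  proof -
    have s1: "{a. a < Suc i \<and> vs ! a \<in> Y} \<subseteq> {a. a < Suc j \<and> vs ! a \<in> Y}"
      using that(3) by auto
    have "j \<in> {a. a < Suc j \<and> vs ! a \<in> Y}" "j \<notin> {a. a < Suc i \<and> vs ! a \<in> Y}"
      using that unfolding Yi_def by auto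
    with s1 have "{a. a < Suc i \<and> vs ! a \<in> Y} \<subset> {a. a < Suc j \<and> vs ! a \<in> Y}" by blast
    then show ?thesis unfolding r_def by (rule psubset_card_mono[rotated]) simp
  qed
  have rinj: "inj_on r Yi"
  proof (rule inj_onI)
    fix i j assume "i \<in> Yi" "j \<in> Yi" "r i = r j"
    then show "i = j" using rmono by (metis less_irrefl nat_neq_iff)
  qed
  have cf: "real (card (C i)) \<le> f (r i)" if "i \<in> Yi" for i
  proof (cases "r i \<le> 2 * k")
    case True
    have "real (r i) * real (card (C i)) \<le> 2 * real k" using rC[OF that] by (metis of_nat_le_iff of_nat_mult of_nat_numeral)
    moreover have "real (r i) > 0" using rpos[OF that] by simp
    ultimately show ?thesis using True unfolding f_def by (simp add: field_simps mult.commute)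
  next
    case False
    have "r i * card (C i) \<le> 2 * k" by (rule rC[OF that])
    then have "card (C i) = 0"
    proof (rule contrapos_pp)
      assume "card (C i) \<noteq> 0"
      then have "r i * 1 \<le> r i * card (C i)" by (intro mult_le_mono2) simp
      then show "\<not> r i * card (C i) \<le> 2 * k" using False by linarith
    qed
    then show ?thesis using False unfolding f_def by simp
  qed
  have f0: "f m \<ge> 0" for m unfolding f_def by simp
  define P where "P = Sigma Yi C"
  have "arcs_between (transitive_tournament vs) Y X \<subseteq> (\<lambda>(i,j). (vs ! i, vs ! j)) ` P"
  proof
    fix p assume "p \<in> arcs_between (transitive_tournament vs) Y X"
    then obtain i j where p: "p = (vs ! i, vs ! j)" "i < j" "j < length vs" "vs ! i \<in> Y" "vs ! j \<in> X"
      unfolding arcs_between_def transitive_tournament_def by blast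
    then have "(i, j) \<in> P" unfolding P_def Yi_def C_def n_def by simp
    then show "p \<in> (\<lambda>(i,j). (vs ! i, vs ! j)) ` P" using p(1) by force
  qed
  then have "card (arcs_between (transitive_tournament vs) Y X) \<le> card P"
  proof -
    have fP: "finite P" unfolding P_def using fYi fC by simp
    show ?thesis using card_mono[OF finite_imageI[OF fP] \<open>_ \<subseteq> _\<close>] card_image_le[OF fP, of "\<lambda>(i,j). (vs ! i, vs ! j)"]
      by linarith
  qed
  also have "card P = (\<Sum>i\<in>Yi. card (C i))" unfolding P_def using fYi fC by (simp add: card_SigmaI)
  finally have c1: "real (card (arcs_between (transitive_tournament vs) Y X)) \<le> (\<Sum>i\<in>Yi. real (card (C i)))"
    by (metis of_nat_le_iff of_nat_sum)
  also have "\<dots> \<le> (\<Sum>i\<in>Yi. f (r i))" by (rule sum_mono) (rule cf)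
  also have "\<dots> = (\<Sum>m\<in>r ` Yi. f m)" by (rule sum.reindex[OF rinj, symmetric, simplified comp_def])
  also have "\<dots> = (\<Sum>m\<in>r ` Yi \<inter> {1..2*k}. f m)"
  proof (rule sum.mono_neutral_right)
    show "\<forall>m\<in>r ` Yi - r ` Yi \<inter> {1..2 * k}. f m = 0"
      using rpos unfolding f_def by auto
  qed (use fYi in auto)
  also have "\<dots> \<le> (\<Sum>m\<in>{1..2*k}. f m)" by (rule sum_mono2) (auto simp: f0)
  also have "\<dots> = (\<Sum>m\<in>{1..2*k}. 2 * real k * inverse (real m))"
    by (rule sum.cong) (auto simp: f_def field_simps)
  also have "\<dots> = 2 * real k * harm (2 * k)"
    unfolding harm_def by (simp add: sum_distrib_left)
  also have "\<dots> \<le> 2 * real k * (1 + ln (2 * real k))"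
    using harm_le_ln[of "2*k"] kpos by (simp add: mult_left_mono)
  finally have "real (card (arcs_between (transitive_tournament vs) Y X)) \<le> 2 * real k * (1 + ln (2 * real k))" .
  then show ?thesis using cut unfolding is_d_cut_def by simp
qed

end
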